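(* Let $h>0$ and let $T_h$ be the complete binary tree of height $h$ (with $2^{h+1}-1$ nodes), viewed as a Cartesian tree. Then $|ng(T_h)|=6(2^h-1)-2h$.
   Context: Heights are counted so that a single leaf is the complete binary tree of height $0$. Sequences are finite sequences of pairwise distinct integers indexed from $1$. The Cartesian tree $C(x)$ of a sequence $x$ of length $n$ is empty if $n=0$; otherwise, if $x[i]$ is the minimum of $x$, it is the binary tree with root $i$, left subtree $C(x[1\ldots i-1])$ and right subtree $C(x[i+1\ldots n])$; every binary tree with $n$ nodes is a Cartesian tree. For $1\le i\le n-1$, $\tau(x,i)$ is obtained from $x$ by exchanging $x[i]$ and $x[i+1]$. For a Cartesian tree $T$ with $n$ nodes, $ng(T,i)=\{C(\tau(x,i)) : C(x)=T\}$ for $1\le i\le n-1$ and $ng(T)=\bigcup_{i=1}^{n-1}ng(T,i)$. *)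

theory Defs
  imports "HOL-Library.Tree"
begin

text \<open>Cartesian trees. Nodes are labelled by (1-based) positions; the extra
  argument is an offset added to positions, so that the subtree of a
  subsequence x[a+1..b] carries the labels a+1..b.\<close>

lemma takeWhile_len_less_aux:
  "x \<in> set xs \<Longrightarrow> \<not> P x \<Longrightarrow> length (takeWhile P xs) < length xs"
  by (induction xs) auto

lemma takeWhile_neq_Min_less:
  "length (takeWhile (\<lambda>z. z \<noteq> Min (set (y # ys))) (y # ys)) < length (y # ys)"
  by (rule takeWhile_len_less_aux[of "Min (set (y # ys))"]) (simp_all del: list.set add: Min_in)

function cart_off :: "int list \<Rightarrow> nat \<Rightarrow> nat tree" where
  "cart_off [] off = Leaf"
| "cart_off (y # ys) off =
     (let xs = y # ys;
          i = length (takeWhile (\<lambda>z. z \<noteq> Min (set xs)) xs)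
      in Node (cart_off (take i xs) off) (off + i + 1)
              (cart_off (drop (Suc i) xs) (off + i + 1)))"
  by pat_completeness auto
termination
proof (relation "measure (\<lambda>(xs, _). length xs)")
  fix y ys off x i
  assume "x = y # ys" "i = length (takeWhile (\<lambda>z. z \<noteq> Min (set x)) x)"
  then have "i < length x" using takeWhile_neq_Min_less[of y ys] by (simp only:)
  then show "((take i x, off), y # ys, off) \<in> measure (\<lambda>(xs, _). length xs)"
    and "((drop (Suc i) x, off + i + 1), y # ys, off) \<in> measure (\<lambda>(xs, _). length xs)"
    using \<open>x = y # ys\<close> by auto
qed auto

definition cart :: "int list \<Rightarrow> nat tree" where
  "cart x = cart_off x 0"

text \<open>tau(x,i): exchange x[i] and x[i+1] (1-based positions, 1 \<le> i \<le> n-1).\<close>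
definition tau :: "int list \<Rightarrow> nat \<Rightarrow> int list" where
  "tau x i = x[i - 1 := x ! i, i := x ! (i - 1)]"

definition ng_i :: "nat tree \<Rightarrow> nat \<Rightarrow> nat tree set" where
  "ng_i T i = {cart (tau x i) | x. distinct x \<and> cart x = T}"

definition ng :: "nat tree \<Rightarrow> nat tree set" where
  "ng T = (\<Union>i\<in>{1..size T - 1}. ng_i T i)"

text \<open>Complete binary tree with k levels (library height k), in-order labels off+1..off+2^k-1.
  The paper's complete binary tree of height h (a single leaf has height 0) is cbt (h+1) 0.\<close>
fun cbt :: "nat \<Rightarrow> nat \<Rightarrow> nat tree" where
  "cbt 0 off = Leaf"
| "cbt (Suc k) off = Node (cbt k off) (off + 2 ^ k) (cbt k (off + 2 ^ k))"

end

theory Submission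
  imports Defs
begin

lemma cart_split:
  fixes xl xr :: "int list"
  assumes "\<forall>v \<in> set xl \<union> set xr. m < v"
  shows "cart_off (xl @ m # xr) off
     = Node (cart_off xl off) (off + length xl + 1) (cart_off xr (off + length xl + 1))"
proof -
  let ?xs = "xl @ m # xr"
  have A': "\<forall>v\<in>set xl \<union> set xr. m \<le> v" using assms by (auto simp: order_less_imp_le)
  have M: "Min (set ?xs) = m" by (rule Min_eqI) (use A' in auto)
  have T: "takeWhile (\<lambda>z. z \<noteq> m) ?xs = xl" using assms by (subst takeWhile_append2) auto
  obtain y ys where E: "?xs = y # ys" by (cases xl) auto
  have "cart_off ?xs off = cart_off (y#ys) off" by (simp only: E)
  also have "\<dots> = (let xs = y # ys; i = length (takeWhile (\<lambda>z. z \<noteq> Min (set xs)) xs)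
      in Node (cart_off (take i xs) off) (off + i + 1)
              (cart_off (drop (Suc i) xs) (off + i + 1)))" by (rule cart_off.simps(2))
  also have "\<dots> = Node (cart_off (take (length xl) ?xs) off) (off + length xl + 1)
        (cart_off (drop (Suc (length xl)) ?xs) (off + length xl + 1))"
    unfolding Let_def E[symmetric] M T ..
  also have "\<dots> = Node (cart_off xl off) (off + length xl + 1) (cart_off xr (off + length xl + 1))"
    by simp
  finally show ?thesis .
qed

lemma decomp:
  fixes x :: "int list"
  assumes "distinct x" "x \<noteq> []"
  shows "\<exists>xl m xr. x = xl @ m # xr \<and> (\<forall>v\<in>set xl \<union> set xr. m < v)"
proof -
  obtain m where mdef: "m = Min (set x)" by blast
  have "m \<in> set x" using assms mdef by simp
  then obtain xl xr where E: "x = xl @ m # xr" by (meson split_list)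
  have "\<forall>v\<in>set xl \<union> set xr. m < v"
  proof
    fix v assume v: "v \<in> set xl \<union> set xr"
    then have "v \<in> set x" using E by auto
    then have "m \<le> v" using mdef by simp
    moreover have "v \<noteq> m" using assms(1) E v by auto
    ultimately show "m < v" by simp
  qed
  with E show ?thesis by blast
qed

lemma cart_Leaf_iff: "cart_off x off = Leaf \<longleftrightarrow> x = []"
  by (cases x) (auto simp: Let_def)

lemma size_cart:
  fixes x :: "int list"
  assumes "distinct x"
  shows "size (cart_off x off) = length x"
  using assms
proof (induction "length x" arbitrary: x off rule: less_induct)
  case less
  show ?case
  proof (cases "x = []")
    case True then show ?thesis by simp
  next
    case False
    then obtain xl m xr where E: "x = xl @ m # xr" and M: "\<forall>v\<in>set xl \<union> set xr. m < v"
      using decomp less.prems by blast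
    have "size (cart_off xl off) = length xl" using less E by auto
    moreover have "size (cart_off xr (off + length xl + 1)) = length xr" using less E by auto
    ultimately show ?thesis using E M cart_split by simp
  qed
qed

lemma mono_cart:
  fixes x :: "int list" and f :: "int \<Rightarrow> int"
  assumes "strict_mono f" "distinct x"
  shows "cart_off (map f x) off = cart_off x off"
  using assms(2)
proof (induction "length x" arbitrary: x off rule: less_induct)
  case less
  show ?case
  proof (cases "x = []")
    case True then show ?thesis by simp
  next
    case False
    then obtain xl m xr where E: "x = xl @ m # xr" and M: "\<forall>v\<in>set xl \<union> set xr. m < v"
      using decomp less.prems by blast
    have M': "\<forall>v\<in>set (map f xl) \<union> set (map f xr). f m < v"
      using M assms(1) by (auto simp: strict_mono_less)
    have "cart_off (map f xl) off = cart_off xl off" using less E by auto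
    moreover have "cart_off (map f xr) (off + length xl + 1) = cart_off xr (off + length xl + 1)"
      using less E by auto
    ultimately show ?thesis using E M cart_split[OF M'] cart_split[OF M] by simp
  qed
qed

lemma shift_cart:
  fixes x :: "int list"
  assumes "distinct x"
  shows "cart_off (map (\<lambda>v. v + c) x) off = cart_off x off"
  by (rule mono_cart) (auto simp: strict_mono_def assms)

lemma scale_cart:
  fixes x :: "int list" and N :: int
  assumes "distinct x" "N > 0"
  shows "cart_off (map ((*) N) x) off = cart_off x off"
  by (rule mono_cart) (auto simp: strict_mono_def assms)

lemma node_decomp:
  fixes x :: "int list"
  assumes "distinct x" "cart_off x off = Node l k r"
  shows "\<exists>xl m xr. x = xl @ m # xr \<and> (\<forall>v\<in>set xl \<union> set xr. m < v) \<and>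
     cart_off xl off = l \<and> k = off + length xl + 1 \<and> cart_off xr k = r"
proof -
  have "x \<noteq> []" using assms(2) by auto
  then obtain xl m xr where E: "x = xl @ m # xr" and M: "\<forall>v\<in>set xl \<union> set xr. m < v"
    using decomp assms(1) by blast
  then show ?thesis using assms(2) cart_split[OF M, of off] by auto
qed

lemma sum_abs_nonneg: "0 \<le> sum_list (map abs (xs::int list))"
  by (induction xs) auto

lemma abs_le_sum: "v \<in> set (xs::int list) \<Longrightarrow> \<bar>v\<bar> \<le> sum_list (map abs xs)"
  by (induction xs) (auto simp: sum_abs_nonneg)

definition lo :: "int list \<Rightarrow> int" where "lo zs = - sum_list (map abs zs) - 1"

lemma lo_less: "v \<in> set zs \<Longrightarrow> lo zs < v"
  unfolding lo_def using abs_le_sum[of v zs] by arith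

lemma glueR:
  fixes xa xb :: "int list"
  assumes "distinct xa" "distinct xb"
  obtains c m where "distinct (xa @ m # map (\<lambda>v. v + c) xb)"
    "\<forall>v\<in>set xa \<union> set (map (\<lambda>v. v + c) xb). m < v"
proof -
  define c where "c = sum_list (map abs xa) + sum_list (map abs xb) + 1"
  define m where "m = lo (xa @ map (\<lambda>v. v + c) xb)"
  have D: "u < v + c" if "u \<in> set xa" "v \<in> set xb" for u v
    using abs_le_sum[OF that(1)] abs_le_sum[OF that(2)] unfolding c_def by arith
  have L: "\<forall>v\<in>set xa \<union> set (map (\<lambda>v. v + c) xb). m < v"
    unfolding m_def using lo_less by auto
  have "distinct (map (\<lambda>v. v + c) xb)" using assms(2) by (simp add: distinct_map inj_on_def)
  moreover have "set xa \<inter> set (map (\<lambda>v. v + c) xb) = {}" using D by fastforce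
  ultimately have "distinct (xa @ m # map (\<lambda>v. v + c) xb)" using L assms(1) by auto
  then show ?thesis using L that by blast
qed

lemma glueL:
  fixes xa xb :: "int list"
  assumes "distinct xa" "distinct xb"
  obtains c m where "distinct (map (\<lambda>v. v + c) xa @ m # xb)"
    "\<forall>v\<in>set (map (\<lambda>v. v + c) xa) \<union> set xb. m < v"
proof -
  define c where "c = - (sum_list (map abs xa) + sum_list (map abs xb) + 1)"
  define m where "m = lo (map (\<lambda>v. v + c) xa @ xb)"
  have D: "u + c < v" if "u \<in> set xa" "v \<in> set xb" for u v
    using abs_le_sum[OF that(1)] abs_le_sum[OF that(2)] unfolding c_def by arith
  have L: "\<forall>v\<in>set (map (\<lambda>v. v + c) xa) \<union> set xb. m < v"
    unfolding m_def using lo_less by auto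
  have "distinct (map (\<lambda>v. v + c) xa)" using assms(1) by (simp add: distinct_map inj_on_def)
  moreover have "set (map (\<lambda>v. v + c) xa) \<inter> set xb = {}" using D by fastforce
  ultimately have "distinct (map (\<lambda>v. v + c) xa @ m # xb)" using L assms(2) by auto
  then show ?thesis using L that by blast
qed

lemma tau_app1: "1 \<le> i \<Longrightarrow> i < length xs \<Longrightarrow> tau (xs @ ys) i = tau xs i @ ys"
proof -
  assume a: "1 \<le> i" "i < length xs"
  then have "i - 1 < length xs" by simp
  with a show ?thesis unfolding tau_def by (simp add: nth_append list_update_append1)
qed

lemma tau_app2: assumes "1 \<le> j" shows "tau (xs @ ys) (length xs + j) = xs @ tau ys j"
proof -
  have e: "length xs + j - 1 = length xs + (j - 1)" using assms by simp
  have "(xs @ ys)[length xs + (j - 1) := ys ! j, length xs + j := ys ! (j - 1)]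
      = xs @ ys[j - 1 := ys ! j, j := ys ! (j - 1)]"
    by (simp add: list_update_append)
  then show ?thesis unfolding tau_def e by (simp add: nth_append)
qed

lemma tau_mid: "tau (xs @ a # b # ys) (Suc (length xs)) = xs @ b # a # ys"
  by (simp add: tau_def nth_append list_update_append)

lemma tau_set: "1 \<le> i \<Longrightarrow> i < length xs \<Longrightarrow> set (tau xs i) = set xs"
  by (simp add: tau_def)

lemma tau_distinct: "1 \<le> i \<Longrightarrow> i < length xs \<Longrightarrow> distinct (tau xs i) = distinct xs"
  by (simp add: tau_def)

lemma tau_length: "length (tau xs i) = length xs"
  by (simp add: tau_def)

definition ngo :: "nat \<Rightarrow> nat tree \<Rightarrow> nat \<Rightarrow> nat tree set" where
  "ngo off T i = {cart_off (tau x i) off | x. distinct x \<and> cart_off x off = T}"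

lemma tau_ne:
  fixes x :: "int list"
  assumes "distinct x" "1 \<le> i" "i < length x"
  shows "cart_off (tau x i) off \<noteq> cart_off x off"
  using assms
proof (induction "length x" arbitrary: x off i rule: less_induct)
  case less
  have "x \<noteq> []" using less.prems by auto
  then obtain xl m xr where E: "x = xl @ m # xr" and M: "\<forall>v\<in>set xl \<union> set xr. m < v"
    using decomp less.prems by blast
  have dxl: "distinct xl" and dxr: "distinct xr" using less.prems E by auto
  consider "i < length xl" | "i = length xl" | "i = length xl + 1" | "i > length xl + 1" by linarith
  then show ?case
  proof cases
    case 1
    have t: "tau x i = tau xl i @ m # xr" using E tau_app1[OF less.prems(2) 1] by simp
    have M2: "\<forall>v\<in>set (tau xl i) \<union> set xr. m < v" using M tau_set[OF less.prems(2) 1] by simp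
    have "cart_off (tau xl i) off \<noteq> cart_off xl off"
      using less.hyps[of xl i off] E dxl less.prems(2) 1 by simp
    then show ?thesis unfolding t cart_split[OF M2] unfolding E cart_split[OF M] by (simp add: tau_length)
  next
    case 2
    then have "xl \<noteq> []" using less.prems by auto
    then obtain xl' y where xl: "xl = xl' @ [y]" by (cases xl rule: rev_exhaust) auto
    have x2: "x = xl' @ y # m # xr" using E xl by simp
    have t: "tau x i = xl' @ m # (y # xr)" unfolding x2 using 2 xl tau_mid by simp
    have M2: "\<forall>v\<in>set xl' \<union> set (y # xr). m < v" using M xl by auto
    show ?thesis unfolding t cart_split[OF M2] unfolding E cart_split[OF M] using xl by simp
  next
    case 3
    then have "xr \<noteq> []" using less.prems E by auto
    then obtain y xr' where xr: "xr = y # xr'" by (cases xr) auto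
    have t: "tau x i = (xl @ [y]) @ m # xr'" unfolding E xr using 3 tau_mid by simp
    have M2: "\<forall>v\<in>set (xl @ [y]) \<union> set xr'. m < v" using M xr by auto
    show ?thesis unfolding t cart_split[OF M2] unfolding E cart_split[OF M] by simp
  next
    case 4
    define j where "j = i - length xl - 1"
    have j1: "1 \<le> j" and ij: "i = length (xl @ [m]) + j" and jl: "j < length xr"
      using 4 less.prems E unfolding j_def by auto
    have t: "tau x i = xl @ m # tau xr j"
      using tau_app2[OF j1, of "xl @ [m]" xr] E ij by simp
    have M2: "\<forall>v\<in>set xl \<union> set (tau xr j). m < v" using M tau_set[OF j1 jl] by simp
    have "cart_off (tau xr j) (off + length xl + 1) \<noteq> cart_off xr (off + length xl + 1)"
      using less.hyps[of xr j "off + length xl + 1"] E dxr j1 jl by simp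
    then show ?thesis unfolding t cart_split[OF M2] unfolding E cart_split[OF M] by simp
  qed
qed

fun dell :: "nat tree \<Rightarrow> nat tree" where
  "dell Leaf = Leaf"
| "dell (Node Leaf a r) = r"
| "dell (Node l a r) = Node (dell l) a r"

fun delr :: "nat tree \<Rightarrow> nat tree" where
  "delr Leaf = Leaf"
| "delr (Node l a Leaf) = l"
| "delr (Node l a r) = Node l a (delr r)"

lemma dell_cart:
  fixes ws :: "int list"
  assumes "distinct (w # ws)"
  shows "cart_off ws (Suc off) = dell (cart_off (w # ws) off)"
  using assms
proof (induction "length ws" arbitrary: w ws off rule: less_induct)
  case less
  obtain xl m xr where E: "w # ws = xl @ m # xr" and M: "\<forall>v\<in>set xl \<union> set xr. m < v"
    using decomp less.prems by blast
  show ?case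
  proof (cases xl)
    case Nil
    then show ?thesis using E cart_split[OF M, of off] by simp
  next
    case (Cons a xl')
    have ws: "ws = xl' @ m # xr" and a: "a = w" using E Cons by auto
    have M2: "\<forall>v\<in>set xl' \<union> set xr. m < v" using M Cons by auto
    have ih: "cart_off xl' (Suc off) = dell (cart_off (w # xl') off)"
      using less.hyps[of xl' w off] ws less.prems by simp
    have ne: "cart_off (w # xl') off \<noteq> Leaf" by (simp add: cart_Leaf_iff)
    have "cart_off ws (Suc off) = Node (cart_off xl' (Suc off)) (Suc off + length xl' + 1)
        (cart_off xr (Suc off + length xl' + 1))" unfolding ws by (rule cart_split[OF M2])
    moreover have "cart_off (w # ws) off = Node (cart_off (w # xl') off) (off + length (w # xl') + 1)
        (cart_off xr (off + length (w # xl') + 1))" unfolding E Cons a by (rule cart_split[OF M[unfolded Cons a]])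
    ultimately show ?thesis using ih ne by (cases "cart_off (w # xl') off") auto
  qed
qed

lemma delr_cart:
  fixes ws :: "int list"
  assumes "distinct (ws @ [w])"
  shows "cart_off ws off = delr (cart_off (ws @ [w]) off)"
  using assms
proof (induction "length ws" arbitrary: w ws off rule: less_induct)
  case less
  obtain xl m xr where E: "ws @ [w] = xl @ m # xr" and M: "\<forall>v\<in>set xl \<union> set xr. m < v"
    using decomp less.prems by blast
  show ?case
  proof (cases xr rule: rev_exhaust)
    case Nil
    then show ?thesis using E cart_split[OF M, of off] by simp
  next
    case (snoc xr' a)
    have ws: "ws = xl @ m # xr'" and a: "a = w" using E snoc by auto
    have M2: "\<forall>v\<in>set xl \<union> set xr'. m < v" using M snoc by auto
    let ?o = "off + length xl + 1"
    have ih: "cart_off xr' ?o = delr (cart_off (xr' @ [w]) ?o)"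
      using less.hyps[of xr' w ?o] ws less.prems by simp
    have ne: "cart_off (xr' @ [w]) ?o \<noteq> Leaf" by (simp add: cart_Leaf_iff)
    have "cart_off ws off = Node (cart_off xl off) ?o (cart_off xr' ?o)" unfolding ws by (rule cart_split[OF M2])
    moreover have "cart_off (ws @ [w]) off = Node (cart_off xl off) ?o (cart_off (xr' @ [w]) ?o)"
      unfolding E snoc a by (rule cart_split[OF M[unfolded snoc a]])
    ultimately show ?thesis using ih ne by (cases "cart_off (xr' @ [w]) ?o") auto
  qed
qed

definition Sr :: "nat tree \<Rightarrow> nat \<Rightarrow> nat tree set" where
  "Sr l off = {cart_off (xl @ [y]) off | xl y. distinct (xl @ [y]) \<and> cart_off xl off = l}"

definition Sl :: "nat tree \<Rightarrow> nat \<Rightarrow> nat tree set" where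
  "Sl r off = {cart_off (y # xr) off | y xr. distinct (y # xr) \<and> cart_off xr (Suc off) = r}"

lemma cart_single: "cart_off [y] off = Node Leaf (Suc off) Leaf"
  using cart_split[of "[]" "[]" y off] by simp

lemma Sr_Leaf: "Sr Leaf off = {Node Leaf (Suc off) Leaf}"
  unfolding Sr_def by (auto simp: cart_Leaf_iff cart_single)

lemma Sl_Leaf: "Sl Leaf off = {Node Leaf (Suc off) Leaf}"
  unfolding Sl_def by (auto simp: cart_Leaf_iff cart_single)

lemma Sr_Node:
  fixes xa xb :: "int list"
  assumes da: "distinct xa" and ca: "cart_off xa off = a" and jd: "j = off + length xa + 1"
    and db: "distinct xb" and cb: "cart_off xb j = b"
  shows "Sr (Node a j b) off = insert (Node (Node a j b) (off + size a + size b + 2) Leaf) (Node a j ` Sr b j)"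
proof (intro equalityI subsetI)
  fix t assume "t \<in> Sr (Node a j b) off"
  then obtain xl y where t: "t = cart_off (xl @ [y]) off" and d: "distinct (xl @ [y])"
    and c: "cart_off xl off = Node a j b" unfolding Sr_def by blast
  obtain xl1 m xr1 where E: "xl = xl1 @ m # xr1" and M: "\<forall>v\<in>set xl1 \<union> set xr1. m < v"
    and c1: "cart_off xl1 off = a" and j1: "j = off + length xl1 + 1" and c2: "cart_off xr1 j = b"
    using node_decomp[of xl off a j b] d c by auto
  have s1: "size a = length xl1" "size b = length xr1" using size_cart d E c1 c2 by auto
  show "t \<in> insert (Node (Node a j b) (off + size a + size b + 2) Leaf) (Node a j ` Sr b j)"
  proof (cases "y < m")
    case True
    have M2: "\<forall>v\<in>set xl \<union> set []. y < v"
    proof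
      fix v assume "v \<in> set xl \<union> set []"
      then have "v = m \<or> v \<in> set xl1 \<union> set xr1" using E by auto
      then show "y < v"
      proof
        assume "v \<in> set xl1 \<union> set xr1"
        then have "m < v" using M by blast
        then show "y < v" using True by simp
      qed (use True in simp)
    qed
    have "t = Node (Node a j b) (off + length xl + 1) Leaf"
      using cart_split[OF M2, of off] t c by simp
    then show ?thesis using s1 E by simp
  next
    case False
    then have "m < y" using d E by (cases "m = y") auto
    then have M2: "\<forall>v\<in>set xl1 \<union> set (xr1 @ [y]). m < v" using M by auto
    have "t = Node a j (cart_off (xr1 @ [y]) j)"
      using cart_split[OF M2, of off] t E c1 j1 by simp
    moreover have "cart_off (xr1 @ [y]) j \<in> Sr b j" unfolding Sr_def using d E c2 by auto
    ultimately show ?thesis by simp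
  qed
next
  fix t assume t: "t \<in> insert (Node (Node a j b) (off + size a + size b + 2) Leaf) (Node a j ` Sr b j)"
  have s1: "size a = length xa" "size b = length xb" using size_cart da db ca cb by auto
  show "t \<in> Sr (Node a j b) off"
  proof (cases "t = Node (Node a j b) (off + size a + size b + 2) Leaf")
    case True
    obtain c m where d0: "distinct (xa @ m # map (\<lambda>v. v + c) xb)"
      and M0: "\<forall>v\<in>set xa \<union> set (map (\<lambda>v. v + c) xb). m < v" using glueR[OF da db] by blast
    let ?x = "xa @ m # map (\<lambda>v. v + c) xb"
    have cx: "cart_off ?x off = Node a j b"
      using cart_split[OF M0, of off] ca jd cb shift_cart[OF db] by simp
    have M1: "\<forall>v\<in>set ?x \<union> set []. lo ?x < v" using lo_less by auto
    have "cart_off (?x @ [lo ?x]) off = Node (Node a j b) (off + length ?x + 1) Leaf"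
      using cart_split[OF M1, of off] cx by simp
    then have tx: "t = cart_off (?x @ [lo ?x]) off" using True s1 by simp
    have "lo ?x \<notin> set ?x" using lo_less by blast
    then have "distinct (?x @ [lo ?x])" using d0 by simp
    then show ?thesis unfolding Sr_def using tx cx by blast
  next
    case False
    then obtain t' where tt: "t = Node a j t'" and t': "t' \<in> Sr b j" using t by auto
    then obtain xb' y where t'e: "t' = cart_off (xb' @ [y]) j" and d: "distinct (xb' @ [y])"
      and c: "cart_off xb' j = b" unfolding Sr_def by blast
    obtain c m where d0: "distinct (map (\<lambda>v. v + c) xa @ m # (xb' @ [y]))"
      and M0: "\<forall>v\<in>set (map (\<lambda>v. v + c) xa) \<union> set (xb' @ [y]). m < v" using glueL[OF da d] by blast
    let ?xl = "map (\<lambda>v. v + c) xa @ m # xb'"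
    have M1: "\<forall>v\<in>set (map (\<lambda>v. v + c) xa) \<union> set xb'. m < v" using M0 by auto
    have "cart_off ?xl off = Node a j b"
      using cart_split[OF M1, of off] ca jd c shift_cart[OF da] by simp
    moreover have "cart_off (?xl @ [y]) off = t"
      using cart_split[OF M0, of off] ca jd t'e tt shift_cart[OF da] by simp
    moreover have "distinct (?xl @ [y])" using d0 by simp
    ultimately show ?thesis unfolding Sr_def by blast
  qed
qed

lemma Sl_Node:
  fixes xa xb :: "int list"
  assumes da: "distinct xa" and ca: "cart_off xa (Suc off) = a" and jd: "j = Suc off + length xa + 1"
    and db: "distinct xb" and cb: "cart_off xb j = b"
  shows "Sl (Node a j b) off = insert (Node Leaf (Suc off) (Node a j b)) ((\<lambda>t. Node t j b) ` Sl a off)"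
proof (intro equalityI subsetI)
  fix t assume "t \<in> Sl (Node a j b) off"
  then obtain xr y where t: "t = cart_off (y # xr) off" and d: "distinct (y # xr)"
    and c: "cart_off xr (Suc off) = Node a j b" unfolding Sl_def by blast
  obtain xa1 m xb1 where E: "xr = xa1 @ m # xb1" and M: "\<forall>v\<in>set xa1 \<union> set xb1. m < v"
    and c1: "cart_off xa1 (Suc off) = a" and j1: "j = Suc off + length xa1 + 1" and c2: "cart_off xb1 j = b"
    using node_decomp[of xr "Suc off" a j b] d c by auto
  show "t \<in> insert (Node Leaf (Suc off) (Node a j b)) ((\<lambda>t. Node t j b) ` Sl a off)"
  proof (cases "y < m")
    case True
    have M2: "\<forall>v\<in>set [] \<union> set xr. y < v"
    proof
      fix v assume "v \<in> set [] \<union> set xr"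
      then have "v = m \<or> v \<in> set xa1 \<union> set xb1" using E by auto
      then show "y < v"
      proof
        assume "v \<in> set xa1 \<union> set xb1"
        then have "m < v" using M by blast
        then show "y < v" using True by simp
      qed (use True in simp)
    qed
    have "t = Node Leaf (Suc off) (Node a j b)"
      using cart_split[OF M2, of off] t c by simp
    then show ?thesis by simp
  next
    case False
    then have "m < y" using d E by (cases "m = y") auto
    then have M2: "\<forall>v\<in>set (y # xa1) \<union> set xb1. m < v" using M by auto
    have "t = Node (cart_off (y # xa1) off) j b"
      using cart_split[OF M2, of off] t E c2 j1 by simp
    moreover have "distinct (y # xa1)" using d E by simp
    then have "cart_off (y # xa1) off \<in> Sl a off" unfolding Sl_def using c1 by blast
    ultimately show ?thesis by simp
  qed
next
  fix t assume t: "t \<in> insert (Node Leaf (Suc off) (Node a j b)) ((\<lambda>t. Node t j b) ` Sl a off)"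
  have s1: "size a = length xa" "size b = length xb" using size_cart da db ca cb by auto
  show "t \<in> Sl (Node a j b) off"
  proof (cases "t = Node Leaf (Suc off) (Node a j b)")
    case True
    obtain c m where d0: "distinct (xa @ m # map (\<lambda>v. v + c) xb)"
      and M0: "\<forall>v\<in>set xa \<union> set (map (\<lambda>v. v + c) xb). m < v" using glueR[OF da db] by blast
    let ?x = "xa @ m # map (\<lambda>v. v + c) xb"
    have cx: "cart_off ?x (Suc off) = Node a j b"
      using cart_split[OF M0, of "Suc off"] ca jd cb shift_cart[OF db] by simp
    have M1: "\<forall>v\<in>set [] \<union> set ?x. lo ?x < v" using lo_less by auto
    have "cart_off (lo ?x # ?x) off = Node Leaf (Suc off) (Node a j b)"
      using cart_split[OF M1, of off] cx by simp
    then have tx: "t = cart_off (lo ?x # ?x) off" using True by simp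
    have "lo ?x \<notin> set ?x" using lo_less by blast
    then have "distinct (lo ?x # ?x)" using d0 by simp
    then show ?thesis unfolding Sl_def using tx cx by blast
  next
    case False
    then obtain t' where tt: "t = Node t' j b" and t': "t' \<in> Sl a off" using t by auto
    then obtain xa' y where t'e: "t' = cart_off (y # xa') off" and d: "distinct (y # xa')"
      and c: "cart_off xa' (Suc off) = a" unfolding Sl_def by blast
    have la: "length xa' = length xa" using size_cart d c s1 by fastforce
    obtain c m where d0: "distinct ((y # xa') @ m # map (\<lambda>v. v + c) xb)"
      and M0: "\<forall>v\<in>set (y # xa') \<union> set (map (\<lambda>v. v + c) xb). m < v" using glueR[OF d db] by blast
    let ?xr = "xa' @ m # map (\<lambda>v. v + c) xb"
    have M1: "\<forall>v\<in>set xa' \<union> set (map (\<lambda>v. v + c) xb). m < v" using M0 by auto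
    have "cart_off ?xr (Suc off) = Node a j b"
      using cart_split[OF M1, of "Suc off"] c jd la cb shift_cart[OF db] by simp
    moreover have "cart_off (y # ?xr) off = t"
      using cart_split[OF M0, of off] jd la cb t'e tt shift_cart[OF db] by simp
    moreover have "distinct (y # ?xr)" using d0 by simp
    ultimately show ?thesis unfolding Sl_def by blast
  qed
qed

lemma sum_map_nonneg: "(\<And>u. 0 \<le> (f u::int)) \<Longrightarrow> 0 \<le> sum_list (map f xs)"
proof (induction xs)
  case (Cons a xs) then show ?case by (simp add: add_nonneg_nonneg)
qed simp

lemma f_le_sum: "v \<in> set xs \<Longrightarrow> (\<And>u. 0 \<le> (f u::int)) \<Longrightarrow> f v \<le> sum_list (map f xs)"
proof (induction xs)
  case (Cons a xs)
  have h1: "0 \<le> sum_list (map f xs)" using sum_map_nonneg Cons.prems(2) by auto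
  have h2: "0 \<le> f a" using Cons.prems(2) by auto
  show ?case
  proof (cases "v = a")
    case True then show ?thesis using h1 by simp
  next
    case False
    then have "f v \<le> sum_list (map f xs)" using Cons.IH Cons.prems by auto
    then show ?thesis using h2 by simp
  qed
qed simp

lemma scale_glue:
  fixes ps q :: "int list"
  assumes dp: "distinct ps" and w: "w \<notin> set ps" and dq: "distinct q" and y: "y \<in> set q"
  obtains N where "N > 0" "distinct (map (\<lambda>v. v + (N*y - w)) ps @ map ((*) N) q)"
proof -
  define N where "N = sum_list (map (\<lambda>v. \<bar>v - w\<bar>) ps) + 1"
  have lt: "\<bar>v - w\<bar> < N" if "v \<in> set ps" for v
    using f_le_sum[OF that, of "\<lambda>v. \<bar>v - w\<bar>"] unfolding N_def by simp
  have N0: "N > 0" unfolding N_def using sum_map_nonneg[of "\<lambda>v. \<bar>v - w\<bar>" ps] by auto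
  have d1: "distinct (map (\<lambda>v. v + (N*y - w)) ps)" using dp by (simp add: distinct_map inj_on_def)
  have d2: "distinct (map ((*) N) q)" using dq N0 by (simp add: distinct_map inj_on_def)
  have d3: "v + (N*y - w) \<noteq> N * u" if "v \<in> set ps" for v u
  proof
    assume e: "v + (N*y - w) = N * u"
    then have e2: "v - w = N * (u - y)" by (simp add: algebra_simps)
    show False
    proof (cases "u = y")
      case True then show False using e2 w that by auto
    next
      case False
      then have "1 \<le> \<bar>u - y\<bar>" by simp
      then have "N * 1 \<le> N * \<bar>u - y\<bar>" using N0 by (intro mult_left_mono) auto
      then have "N \<le> \<bar>v - w\<bar>" using e2 N0 by (simp add: abs_mult)
      then show False using lt[OF that] by simp
    qed
  qed
  have "distinct (map (\<lambda>v. v + (N*y - w)) ps @ map ((*) N) q)"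
    using d1 d2 d3 by auto
  then show ?thesis using that N0 by blast
qed

lemma A_calc:
  fixes xl' xr :: "int list"
  assumes M: "\<forall>v\<in>set (xl' @ [y]) \<union> set xr. m < v" and d: "distinct (xl' @ [y])"
  shows "cart_off (tau (xl' @ y # m # xr) (Suc (length xl'))) off
     = Node (delr (cart_off (xl' @ [y]) off)) (off + length xl' + 1) (cart_off (y # xr) (off + length xl' + 1))"
proof -
  have M2: "\<forall>v\<in>set xl' \<union> set (y # xr). m < v" using M by auto
  have "tau (xl' @ y # m # xr) (Suc (length xl')) = xl' @ m # y # xr" by (rule tau_mid)
  then show ?thesis using cart_split[OF M2, of off] delr_cart[OF d, of off] by simp
qed

lemma B_calc:
  fixes xl xr :: "int list"
  assumes M: "\<forall>v\<in>set xl \<union> set (y # xr). m < v" and d: "distinct (y # xr)"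
  shows "cart_off (tau (xl @ m # y # xr) (Suc (length xl))) off
     = Node (cart_off (xl @ [y]) off) (off + length xl + 2) (dell (cart_off (y # xr) (off + length xl + 1)))"
proof -
  have M2: "\<forall>v\<in>set (xl @ [y]) \<union> set xr. m < v" using M by auto
  have "tau (xl @ m # y # xr) (Suc (length xl)) = (xl @ [y]) @ m # xr" using tau_mid by simp
  then show ?thesis using cart_split[OF M2, of off] dell_cart[OF d, of "off + length xl + 1"] by simp
qed

lemma ngo_left:
  fixes xr0 :: "int list"
  assumes dr: "distinct xr0" and cr: "cart_off xr0 k = r" and kd: "k = off + size l + 1"
    and i1: "1 \<le> i" and il: "i < size l"
  shows "ngo off (Node l k r) i = (\<lambda>t. Node t k r) ` ngo off l i"
proof (intro equalityI subsetI)
  fix t assume "t \<in> ngo off (Node l k r) i"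
  then obtain x where t: "t = cart_off (tau x i) off" and d: "distinct x" and c: "cart_off x off = Node l k r"
    unfolding ngo_def by blast
  obtain xl m xr where E: "x = xl @ m # xr" and M: "\<forall>v\<in>set xl \<union> set xr. m < v"
    and c1: "cart_off xl off = l" and k1: "k = off + length xl + 1" and c2: "cart_off xr k = r"
    using node_decomp[OF d c] by blast
  have lx: "length xl = size l" using kd k1 by simp
  have dl: "distinct xl" using d E by simp
  have te: "tau x i = tau xl i @ m # xr" using E tau_app1[OF i1, of xl "m # xr"] il lx by simp
  have M2: "\<forall>v\<in>set (tau xl i) \<union> set xr. m < v" using M tau_set[OF i1, of xl] il lx by simp
  have "t = Node (cart_off (tau xl i) off) k r"
    using t te cart_split[OF M2, of off] k1 c2 by (simp add: tau_length)
  moreover have "cart_off (tau xl i) off \<in> ngo off l i" unfolding ngo_def using dl c1 by blast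
  ultimately show "t \<in> (\<lambda>t. Node t k r) ` ngo off l i" by blast
next
  fix t assume "t \<in> (\<lambda>t. Node t k r) ` ngo off l i"
  then obtain xl where t: "t = Node (cart_off (tau xl i) off) k r" and dl: "distinct xl"
    and c1: "cart_off xl off = l" unfolding ngo_def by blast
  have lx: "length xl = size l" using size_cart dl c1 by fastforce
  obtain c m where d0: "distinct (xl @ m # map (\<lambda>v. v + c) xr0)"
    and M0: "\<forall>v\<in>set xl \<union> set (map (\<lambda>v. v + c) xr0). m < v" using glueR[OF dl dr] by blast
  let ?x = "xl @ m # map (\<lambda>v. v + c) xr0"
  have cx: "cart_off ?x off = Node l k r"
    using cart_split[OF M0, of off] c1 kd lx cr shift_cart[OF dr] by simp
  have te: "tau ?x i = tau xl i @ m # map (\<lambda>v. v + c) xr0" using tau_app1[OF i1] il lx by simp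
  have M2: "\<forall>v\<in>set (tau xl i) \<union> set (map (\<lambda>v. v + c) xr0). m < v" using M0 tau_set[OF i1, of xl] il lx by simp
  have "cart_off (tau ?x i) off = t"
    unfolding te cart_split[OF M2] using t kd lx cr shift_cart[OF dr] by (simp add: tau_length)
  then show "t \<in> ngo off (Node l k r) i" unfolding ngo_def using d0 cx by blast
qed

lemma ngo_right:
  fixes xl0 :: "int list"
  assumes dl: "distinct xl0" and cl: "cart_off xl0 off = l" and kd: "k = off + size l + 1"
    and j1: "1 \<le> j" and jl: "j < size r"
  shows "ngo off (Node l k r) (size l + 1 + j) = Node l k ` ngo k r j"
proof (intro equalityI subsetI)
  fix t assume "t \<in> ngo off (Node l k r) (size l + 1 + j)"
  then obtain x where t: "t = cart_off (tau x (size l + 1 + j)) off" and d: "distinct x"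
    and c: "cart_off x off = Node l k r" unfolding ngo_def by blast
  obtain xl m xr where E: "x = xl @ m # xr" and M: "\<forall>v\<in>set xl \<union> set xr. m < v"
    and c1: "cart_off xl off = l" and k1: "k = off + length xl + 1" and c2: "cart_off xr k = r"
    using node_decomp[OF d c] by blast
  have lx: "length xl = size l" using kd k1 by simp
  have dr: "distinct xr" using d E by simp
  have lr: "length xr = size r" using size_cart dr c2 by fastforce
  have te: "tau x (size l + 1 + j) = xl @ m # tau xr j"
    using E tau_app2[OF j1, of "xl @ [m]" xr] lx by simp
  have M2: "\<forall>v\<in>set xl \<union> set (tau xr j). m < v" using M tau_set[OF j1, of xr] jl lr by simp
  have "t = Node l k (cart_off (tau xr j) k)"
    using t te cart_split[OF M2, of off] k1 c1 by simp
  moreover have "cart_off (tau xr j) k \<in> ngo k r j" unfolding ngo_def using dr c2 by blast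
  ultimately show "t \<in> Node l k ` ngo k r j" by blast
next
  fix t assume "t \<in> Node l k ` ngo k r j"
  then obtain xr where t: "t = Node l k (cart_off (tau xr j) k)" and dr: "distinct xr"
    and c2: "cart_off xr k = r" unfolding ngo_def by blast
  have lr: "length xr = size r" using size_cart dr c2 by fastforce
  have lx: "length xl0 = size l" using size_cart dl cl by fastforce
  obtain c m where d0: "distinct (map (\<lambda>v. v + c) xl0 @ m # xr)"
    and M0: "\<forall>v\<in>set (map (\<lambda>v. v + c) xl0) \<union> set xr. m < v" using glueL[OF dl dr] by blast
  let ?x = "map (\<lambda>v. v + c) xl0 @ m # xr"
  have cx: "cart_off ?x off = Node l k r"
    using cart_split[OF M0, of off] cl kd lx c2 shift_cart[OF dl] by simp
  have te: "tau ?x (size l + 1 + j) = map (\<lambda>v. v + c) xl0 @ m # tau xr j"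
    using tau_app2[OF j1, of "map (\<lambda>v. v + c) xl0 @ [m]" xr] lx by simp
  have M2: "\<forall>v\<in>set (map (\<lambda>v. v + c) xl0) \<union> set (tau xr j). m < v"
    using M0 tau_set[OF j1, of xr] jl lr by simp
  have "cart_off (tau ?x (size l + 1 + j)) off = t"
    unfolding te cart_split[OF M2] using t kd lx cl shift_cart[OF dl] by simp
  then show "t \<in> ngo off (Node l k r) (size l + 1 + j)" unfolding ngo_def using d0 cx by blast
qed

lemma ngo_A:
  fixes xl0 xr0 :: "int list"
  assumes dl: "distinct xl0" and cl: "cart_off xl0 off = l" and dr: "distinct xr0"
    and cr: "cart_off xr0 k = r" and kd: "k = off + size l + 1" and s1: "1 \<le> size l"
  shows "ngo off (Node l k r) (size l) = (\<lambda>t. Node (delr l) (k - 1) t) ` Sl r (k - 1)"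
proof (intro equalityI subsetI)
  fix t assume "t \<in> ngo off (Node l k r) (size l)"
  then obtain x where t: "t = cart_off (tau x (size l)) off" and d: "distinct x"
    and c: "cart_off x off = Node l k r" unfolding ngo_def by blast
  obtain xl m xr where E: "x = xl @ m # xr" and M: "\<forall>v\<in>set xl \<union> set xr. m < v"
    and c1: "cart_off xl off = l" and k1: "k = off + length xl + 1" and c2: "cart_off xr k = r"
    using node_decomp[OF d c] by blast
  have lx: "length xl = size l" using kd k1 by simp
  then have "xl \<noteq> []" using s1 by auto
  then obtain xl' y where xl: "xl = xl' @ [y]" by (cases xl rule: rev_exhaust) auto
  have dxl: "distinct (xl' @ [y])" using d E xl by simp
  have M1: "\<forall>v\<in>set (xl' @ [y]) \<union> set xr. m < v" using M xl by simp
  have sl: "size l = Suc (length xl')" using lx xl by simp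
  have k2: "off + length xl' + 1 = k - 1" using k1 xl by simp
  have e: "tau x (size l) = tau (xl' @ y # m # xr) (Suc (length xl'))" using E xl sl by simp
  have tt: "t = Node (delr l) (k - 1) (cart_off (y # xr) (k - 1))"
    unfolding t e A_calc[OF M1 dxl, of off] k2 c1[unfolded xl] ..
  have "distinct (y # xr)" using d E xl by simp
  moreover have "cart_off xr (Suc (k - 1)) = r" using c2 k1 by simp
  ultimately have "cart_off (y # xr) (k - 1) \<in> Sl r (k - 1)"
    unfolding Sl_def by blast
  with tt show "t \<in> (\<lambda>t. Node (delr l) (k - 1) t) ` Sl r (k - 1)" by blast
next
  fix t assume "t \<in> (\<lambda>t. Node (delr l) (k - 1) t) ` Sl r (k - 1)"
  then obtain y xr where t: "t = Node (delr l) (k - 1) (cart_off (y # xr) (k - 1))"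
    and dyr: "distinct (y # xr)" and c2: "cart_off xr (Suc (k - 1)) = r" unfolding Sl_def by blast
  have c2': "cart_off xr k = r" using c2 kd by simp
  have lx0: "length xl0 = size l" using size_cart dl cl by fastforce
  then have "xl0 \<noteq> []" using s1 by auto
  then obtain ps w where xl0: "xl0 = ps @ [w]" by (cases xl0 rule: rev_exhaust) auto
  have dps: "distinct ps" and wps: "w \<notin> set ps" using dl xl0 by auto
  obtain N where N0: "N > 0" and dN: "distinct (map (\<lambda>v. v + (N*y - w)) ps @ map ((*) N) (y # xr))"
    using scale_glue[OF dps wps dyr, of y] by auto
  define g where "g = (\<lambda>v::int. v + (N*y - w))"
  let ?xl = "map g ps @ [N*y]"
  let ?xr = "map ((*) N) xr"
  define m where "m = lo (?xl @ ?xr)"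
  have xl_eq: "?xl = map g xl0" unfolding g_def xl0 by simp
  have dxl: "distinct ?xl" using dN unfolding g_def by auto
  have cxl: "cart_off ?xl off = l" unfolding xl_eq unfolding g_def shift_cart[OF dl] by (rule cl)
  have M: "\<forall>v\<in>set ?xl \<union> set ?xr. m < v" unfolding m_def using lo_less by auto
  have dx: "distinct (?xl @ m # ?xr)" using dN M unfolding g_def by auto
  have lxl: "length ?xl = size l" using lx0 xl0 by simp
  have lps: "size l = Suc (length ps)" using lx0 xl0 by simp
  have dxr: "distinct xr" using dyr by simp
  have cx: "cart_off (?xl @ m # ?xr) off = Node l k r"
    using cart_split[OF M, of off] cxl kd scale_cart[OF dxr N0] c2' lps by simp
  have M1: "\<forall>v\<in>set (map g ps @ [N*y]) \<union> set ?xr. m < v" using M by simp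
  have e1: "?xl @ m # ?xr = map g ps @ (N*y) # m # ?xr" by simp
  have sl: "size l = Suc (length (map g ps))" using lxl by simp
  have k2: "off + length (map g ps) + 1 = k - 1" using lxl kd by simp
  have e3: "(N * y) # ?xr = map ((*) N) (y # xr)" by simp
  have "cart_off (tau (?xl @ m # ?xr) (size l)) off
      = Node (delr l) (k - 1) (cart_off ((N * y) # ?xr) (k - 1))"
    unfolding e1 sl A_calc[OF M1 dxl, of off] cxl k2 ..
  also have "\<dots> = t" unfolding e3 scale_cart[OF dyr N0] t ..
  finally show "t \<in> ngo off (Node l k r) (size l)" unfolding ngo_def using dx cx by blast
qed

lemma ngo_B:
  fixes xl0 xr0 :: "int list"
  assumes dl: "distinct xl0" and cl: "cart_off xl0 off = l" and dr: "distinct xr0"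
    and cr: "cart_off xr0 k = r" and kd: "k = off + size l + 1" and s1: "1 \<le> size r"
  shows "ngo off (Node l k r) (size l + 1) = (\<lambda>t. Node t (k + 1) (dell r)) ` Sr l off"
proof (intro equalityI subsetI)
  fix t assume "t \<in> ngo off (Node l k r) (size l + 1)"
  then obtain x where t: "t = cart_off (tau x (size l + 1)) off" and d: "distinct x"
    and c: "cart_off x off = Node l k r" unfolding ngo_def by blast
  obtain xl m xr where E: "x = xl @ m # xr" and M: "\<forall>v\<in>set xl \<union> set xr. m < v"
    and c1: "cart_off xl off = l" and k1: "k = off + length xl + 1" and c2: "cart_off xr k = r"
    using node_decomp[OF d c] by blast
  have lx: "length xl = size l" using kd k1 by simp
  have lr: "length xr = size r" using size_cart d E c2 by fastforce
  then have "xr \<noteq> []" using s1 by auto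
  then obtain y xr' where xr: "xr = y # xr'" by (cases xr) auto
  have dyr: "distinct (y # xr')" using d E xr by simp
  have M1: "\<forall>v\<in>set xl \<union> set (y # xr'). m < v" using M xr by simp
  have e: "tau x (size l + 1) = tau (xl @ m # y # xr') (Suc (length xl))" using E xr lx by simp
  have k2: "off + length xl + 1 = k" "off + length xl + 2 = k + 1" using k1 by simp_all
  have "t = Node (cart_off (xl @ [y]) off) (k + 1) (dell r)"
    unfolding t e B_calc[OF M1 dyr, of off] k2 c2[unfolded xr] ..
  moreover have "cart_off (xl @ [y]) off \<in> Sr l off"
    unfolding Sr_def using d E xr c1 by auto
  ultimately show "t \<in> (\<lambda>t. Node t (k + 1) (dell r)) ` Sr l off" by blast
next
  fix t assume "t \<in> (\<lambda>t. Node t (k + 1) (dell r)) ` Sr l off"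
  then obtain xl y where t: "t = Node (cart_off (xl @ [y]) off) (k + 1) (dell r)"
    and dly: "distinct (xl @ [y])" and c1: "cart_off xl off = l" unfolding Sr_def by blast
  have lx: "length xl = size l" using size_cart dly c1 by fastforce
  have lr0: "length xr0 = size r" using size_cart dr cr by fastforce
  then have "xr0 \<noteq> []" using s1 by auto
  then obtain w ps where xr0: "xr0 = w # ps" by (cases xr0) auto
  have dps: "distinct ps" and wps: "w \<notin> set ps" using dr xr0 by auto
  obtain N where N0: "N > 0" and dN: "distinct (map (\<lambda>v. v + (N*y - w)) ps @ map ((*) N) (xl @ [y]))"
    using scale_glue[OF dps wps dly, of y] by auto
  define g where "g = (\<lambda>v::int. v + (N*y - w))"
  let ?xl = "map ((*) N) xl"
  let ?xr = "(N*y) # map g ps"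
  define m where "m = lo (?xl @ ?xr)"
  have xr_eq: "?xr = map g xr0" unfolding g_def xr0 by simp
  have dxr: "distinct ?xr" using dN unfolding g_def by auto
  have dxl: "distinct xl" using dly by simp
  have cxr: "cart_off ?xr k = r" unfolding xr_eq unfolding g_def shift_cart[OF dr] by (rule cr)
  have M: "\<forall>v\<in>set ?xl \<union> set ?xr. m < v" unfolding m_def using lo_less by auto
  have dx: "distinct (?xl @ m # ?xr)" using dN M unfolding g_def by auto
  have cx: "cart_off (?xl @ m # ?xr) off = Node l k r"
    using cart_split[OF M, of off] scale_cart[OF dxl N0] c1 lx kd cxr by simp
  have M1: "\<forall>v\<in>set ?xl \<union> set ((N*y) # map g ps). m < v" using M by simp
  have sl: "size l + 1 = Suc (length ?xl)" using lx by simp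
  have k2: "off + length ?xl + 1 = k" "off + length ?xl + 2 = k + 1" using lx kd by simp_all
  have e3: "?xl @ [N * y] = map ((*) N) (xl @ [y])" by simp
  have "cart_off (tau (?xl @ m # ?xr) (size l + 1)) off
      = Node (cart_off (?xl @ [N * y]) off) (k + 1) (dell (cart_off ?xr k))"
    unfolding sl B_calc[OF M1 dxr, of off] k2 ..
  also have "\<dots> = t" unfolding e3 scale_cart[OF dly N0] cxr t ..
  finally show "t \<in> ngo off (Node l k r) (size l + 1)" unfolding ngo_def using dx cx by blast
qed

lemma size_cbt: "size (cbt n off) = 2 ^ n - 1"
proof (induction n arbitrary: off)
  case (Suc n)
  have p: "(1::nat) \<le> 2 ^ n" by simp
  have h: "size (cbt (Suc n) off) = size (cbt n off) + 1 + size (cbt n (off + 2^n))" by simp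
  moreover have "(2::nat)^Suc n = 2^n + 2^n" by simp
  ultimately show ?case using p Suc[of off] Suc[of "off + 2^n"] by linarith
qed simp

lemma real_cbt: "\<exists>x::int list. distinct x \<and> cart_off x off = cbt n off"
proof (induction n arbitrary: off)
  case 0 then show ?case by (intro exI[of _ "[]"]) simp
next
  case (Suc n)
  obtain xa :: "int list" where da: "distinct xa" and ca: "cart_off xa off = cbt n off" using Suc by blast
  obtain xb :: "int list" where db: "distinct xb" and cb: "cart_off xb (off + 2^n) = cbt n (off + 2^n)"
    using Suc by blast
  have la: "length xa = 2^n - 1" using size_cart[OF da, of off] ca size_cbt by simp
  have k: "off + length xa + 1 = off + 2^n" using la by simp
  obtain c m where d0: "distinct (xa @ m # map (\<lambda>v. v + c) xb)"
    and M0: "\<forall>v\<in>set xa \<union> set (map (\<lambda>v. v + c) xb). m < v" using glueR[OF da db] by blast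
  have "cart_off (xa @ m # map (\<lambda>v. v + c) xb) off = cbt (Suc n) off"
    unfolding cart_split[OF M0] k shift_cart[OF db] ca cb by simp
  then show ?case using d0 by blast
qed

lemma Sr_cbt: "card (Sr (cbt n off) off) = n + 1"
proof (induction n arbitrary: off)
  case 0 then show ?case by (simp add: Sr_Leaf)
next
  case (Suc n)
  obtain xa :: "int list" where da: "distinct xa" and ca: "cart_off xa off = cbt n off" using real_cbt by blast
  obtain xb :: "int list" where db: "distinct xb" and cb: "cart_off xb (off + 2^n) = cbt n (off + 2^n)"
    using real_cbt by blast
  have la: "length xa = 2^n - 1" using size_cart[OF da, of off] ca size_cbt by simp
  have k: "off + 2^n = off + length xa + 1" using la by simp
  let ?a = "cbt n off" and ?j = "off + 2^n" and ?b = "cbt n (off + 2^n)"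
  have E: "Sr (cbt (Suc n) off) off = insert (Node (Node ?a ?j ?b) (off + size ?a + size ?b + 2) Leaf)
      (Node ?a ?j ` Sr ?b ?j)"
    using Sr_Node[OF da ca k db cb] by simp
  have fin: "finite (Sr ?b ?j)" using Suc[of ?j] card_ge_0_finite by force
  have "(2::nat) ^ n \<ge> 1" by simp
  then have ne: "off + size ?a + size ?b + 2 \<noteq> ?j" using size_cbt by simp
  have nin: "Node (Node ?a ?j ?b) (off + size ?a + size ?b + 2) Leaf \<notin> Node ?a ?j ` Sr ?b ?j"
    using ne by auto
  have "card (Node ?a ?j ` Sr ?b ?j) = card (Sr ?b ?j)" by (rule card_image) (simp add: inj_on_def)
  then show ?case unfolding E using card_insert_disjoint[OF finite_imageI[OF fin] nin] Suc[of ?j] by simp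
qed

lemma Sl_cbt: "card (Sl (cbt n (Suc off)) off) = n + 1"
proof (induction n)
  case 0 then show ?case by (simp add: Sl_Leaf)
next
  case (Suc n)
  obtain xa :: "int list" where da: "distinct xa" and ca: "cart_off xa (Suc off) = cbt n (Suc off)"
    using real_cbt by blast
  obtain xb :: "int list" where db: "distinct xb"
    and cb: "cart_off xb (Suc off + 2^n) = cbt n (Suc off + 2^n)" using real_cbt by blast
  have la: "length xa = 2^n - 1" using size_cart[OF da, of "Suc off"] ca size_cbt by simp
  have k: "Suc off + 2^n = Suc off + length xa + 1" using la by simp
  let ?a = "cbt n (Suc off)" and ?j = "Suc off + 2^n" and ?b = "cbt n (Suc off + 2^n)"
  have E: "Sl (cbt (Suc n) (Suc off)) off = insert (Node Leaf (Suc off) (Node ?a ?j ?b))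
      ((\<lambda>t. Node t ?j ?b) ` Sl ?a off)"
    using Sl_Node[OF da ca k db cb] by simp
  have fin: "finite (Sl ?a off)" using Suc card_ge_0_finite by force
  have nin: "Node Leaf (Suc off) (Node ?a ?j ?b) \<notin> (\<lambda>t. Node t ?j ?b) ` Sl ?a off" by auto
  have "card ((\<lambda>t. Node t ?j ?b) ` Sl ?a off) = card (Sl ?a off)" by (rule card_image) (simp add: inj_on_def)
  then show ?case unfolding E using card_insert_disjoint[OF finite_imageI[OF fin] nin] Suc by simp
qed

definition NG :: "nat \<Rightarrow> nat tree \<Rightarrow> nat tree set" where
  "NG off T = (\<Union>i\<in>{1..size T - 1}. ngo off T i)"

lemma idx_split:
  assumes "1 \<le> (s::nat)"
  shows "{1..2 * s} = {1..s - 1} \<union> {s} \<union> {s + 1} \<union> (\<lambda>j. s + 1 + j) ` {1..s - 1}"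
proof (intro equalityI subsetI)
  fix i assume i: "i \<in> {1..2 * s}"
  show "i \<in> {1..s - 1} \<union> {s} \<union> {s + 1} \<union> (\<lambda>j. s + 1 + j) ` {1..s - 1}"
  proof (cases "i \<le> s + 1")
    case True
    then consider "i < s" | "i = s" | "i = s + 1" by linarith
    then show ?thesis
    proof cases
      case 1 then have "i \<in> {1..s - 1}" using i by simp
      then show ?thesis by blast
    qed simp_all
  next
    case False
    then have "i = s + 1 + (i - s - 1)" "i - s - 1 \<in> {1..s - 1}" using i by auto
    then show ?thesis by blast
  qed
next
  fix i assume "i \<in> {1..s - 1} \<union> {s} \<union> {s + 1} \<union> (\<lambda>j. s + 1 + j) ` {1..s - 1}"
  then consider "i \<in> {1..s - 1}" | "i = s" | "i = s + 1" | j where "j \<in> {1..s - 1}" "i = s + 1 + j"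
    by blast
  then show "i \<in> {1..2 * s}"
  proof cases
    case 4
    then have "j \<le> s - 1" "1 \<le> j" by auto
    then show ?thesis using 4 assms by simp
  qed (use assms in auto)
qed

lemma NG_main:
  "finite (NG off (cbt (Suc h) off)) \<and> int (card (NG off (cbt (Suc h) off))) = 6 * 2 ^ h - 6 - 2 * int h"
proof (induction h arbitrary: off)
  case 0
  have "NG off (cbt (Suc 0) off) = {}" unfolding NG_def by simp
  then show ?case by simp
next
  case (Suc h)
  define s where "s = (2::nat) ^ Suc h - 1"
  define k where "k = off + 2 ^ Suc h"
  define l where "l = cbt (Suc h) off"
  define r where "r = cbt (Suc h) k"
  have T: "cbt (Suc (Suc h)) off = Node l k r" unfolding k_def l_def r_def by simp
  have p: "(2::nat) ^ Suc h \<ge> 2"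
  proof -
    have "(1::nat) \<le> 2 ^ h" by simp
    then show ?thesis by simp
  qed
  have sl: "size l = s" and sr: "size r = s" unfolding s_def l_def r_def by (simp only: size_cbt)+
  have s1: "1 \<le> s" unfolding s_def using p by linarith
  have kd: "k = off + size l + 1" unfolding k_def sl s_def using p by linarith
  have sT: "size (Node l k r) - 1 = 2 * s" using sl sr by simp
  obtain xl0 :: "int list" where dl: "distinct xl0" and cl: "cart_off xl0 off = l"
    using real_cbt unfolding l_def by blast
  obtain xr0 :: "int list" where dr: "distinct xr0" and cr: "cart_off xr0 k = r"
    using real_cbt unfolding r_def by blast
  define f where "f = ngo off (Node l k r)"
  define Ls where "Ls = (\<lambda>t. Node t k r) ` NG off l"
  define Rs where "Rs = Node l k ` NG k r"
  define As where "As = (\<lambda>t. Node (delr l) (k - 1) t) ` Sl r (k - 1)"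
  define Bs where "Bs = (\<lambda>t. Node t (k + 1) (dell r)) ` Sr l off"
  have "NG off (cbt (Suc (Suc h)) off) = (\<Union>i\<in>{1..2 * s}. f i)" unfolding NG_def T sT f_def ..
  also have "\<dots> = (\<Union>i\<in>{1..s - 1}. f i) \<union> f s \<union> f (s + 1) \<union> (\<Union>j\<in>{1..s - 1}. f (s + 1 + j))"
    unfolding idx_split[OF s1] UN_Un image_image by simp
  also have "(\<Union>i\<in>{1..s - 1}. f i) = Ls"
  proof -
    have "(\<Union>i\<in>{1..s - 1}. f i) = (\<Union>i\<in>{1..s - 1}. (\<lambda>t. Node t k r) ` ngo off l i)"
      unfolding f_def using ngo_left[OF dr cr kd] sl by (intro SUP_cong) auto
    also have "\<dots> = Ls" unfolding Ls_def NG_def sl image_UN ..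
    finally show ?thesis .
  qed
  also have "(\<Union>j\<in>{1..s - 1}. f (s + 1 + j)) = Rs"
  proof -
    have "(\<Union>j\<in>{1..s - 1}. f (s + 1 + j)) = (\<Union>j\<in>{1..s - 1}. Node l k ` ngo k r j)"
      unfolding f_def using ngo_right[OF dl cl kd] sl sr by (intro SUP_cong) auto
    also have "\<dots> = Rs" unfolding Rs_def NG_def sr image_UN ..
    finally show ?thesis .
  qed
  also have "f s = As" unfolding As_def f_def using ngo_A[OF dl cl dr cr kd] sl s1 by simp
  also have "f (s + 1) = Bs" unfolding Bs_def f_def using ngo_B[OF dl cl dr cr kd] sl sr s1 by simp
  finally have NGe: "NG off (cbt (Suc (Suc h)) off) = Ls \<union> As \<union> Bs \<union> Rs" .
  have fl: "finite (NG off l)" and cl': "int (card (NG off l)) = 6 * 2 ^ h - 6 - 2 * int h"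
    using Suc[of off] unfolding l_def by auto
  have fr: "finite (NG k r)" and cr': "int (card (NG k r)) = 6 * 2 ^ h - 6 - 2 * int h"
    using Suc[of k] unfolding r_def by auto
  have k1: "Suc (k - 1) = k" unfolding k_def using p by linarith
  have cSl: "card (Sl r (k - 1)) = Suc h + 1" using Sl_cbt[of "Suc h" "k - 1"] unfolding k1 r_def .
  have cSr: "card (Sr l off) = Suc h + 1" unfolding l_def by (rule Sr_cbt)
  have fA0: "finite (Sl r (k - 1))" using cSl card_ge_0_finite by force
  have fB0: "finite (Sr l off)" using cSr card_ge_0_finite by force
  have cL: "card Ls = card (NG off l)" unfolding Ls_def by (rule card_image) (simp add: inj_on_def)
  have cR: "card Rs = card (NG k r)" unfolding Rs_def by (rule card_image) (simp add: inj_on_def)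
  have cA: "card As = Suc h + 1" unfolding As_def using cSl by (subst card_image) (simp_all add: inj_on_def)
  have cB: "card Bs = Suc h + 1" unfolding Bs_def using cSr by (subst card_image) (simp_all add: inj_on_def)
  have fL: "finite Ls" unfolding Ls_def using fl by simp
  have fR: "finite Rs" unfolding Rs_def using fr by simp
  have fA: "finite As" unfolding As_def using fA0 by simp
  have fB: "finite Bs" unfolding Bs_def using fB0 by simp
  have k0: "k \<ge> 1" unfolding k_def using p by linarith
  have dLA: "Ls \<inter> As = {}" unfolding Ls_def As_def using k0 by auto
  have dLAB: "(Ls \<union> As) \<inter> Bs = {}" unfolding Ls_def As_def Bs_def using k0 by auto
  have dLR: "Ls \<inter> Rs = {}"
  proof (rule ccontr)
    assume "Ls \<inter> Rs \<noteq> {}"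
    then have "l \<in> NG off l" unfolding Ls_def Rs_def by auto
    then obtain i x where i: "i \<in> {1..s - 1}" and e: "l = cart_off (tau x i) off" and d: "distinct x"
      and c: "cart_off x off = l" unfolding NG_def ngo_def sl by blast
    have "length x = s" using size_cart[OF d, of off] c sl by simp
    then have i2: "1 \<le> i" "i < length x" using i s1 by auto
    show False using tau_ne[OF d i2, of off] e c by simp
  qed
  have dABR: "(Ls \<union> As \<union> Bs) \<inter> Rs = {}" using dLR unfolding As_def Bs_def Rs_def using k0 by auto
  have "card (Ls \<union> As \<union> Bs \<union> Rs) = card Ls + card As + card Bs + card Rs"
    using card_Un_disjoint[OF finite_UnI[OF finite_UnI[OF fL fA] fB] fR dABR]
      card_Un_disjoint[OF finite_UnI[OF fL fA] fB dLAB] card_Un_disjoint[OF fL fA dLA] by simp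
  then have "int (card (NG off (cbt (Suc (Suc h)) off))) = 2 * (6 * 2 ^ h - 6 - 2 * int h) + 2 * (int h + 2)"
    unfolding NGe using cL cR cA cB cl' cr' by simp
  moreover have "finite (NG off (cbt (Suc (Suc h)) off))" unfolding NGe using fL fA fB fR by simp
  ultimately show ?case by simp
qed

theorem lemma9:
  fixes h :: nat
  assumes "h > 0"
  shows "int (card (ng (cbt (h + 1) 0))) = 6 * (2 ^ h - 1) - 2 * int h"
proof -
  have "ng (cbt (h + 1) 0) = NG 0 (cbt (Suc h) 0)"
    unfolding ng_def NG_def ng_i_def ngo_def cart_def by simp
  then show ?thesis using NG_main[of 0 h] by (simp add: algebra_simps)
qed

end
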